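(* For every even integer $k \geq 2$ there exists a family $(G_i)_{i\in\mathbb{N}}$ (with $\mathbb{N}=\{0,1,2,\dots\}$) of $k$-degenerate undirected graphs such that $$n(G_i)=\frac{3k+6}{2}+i\,\frac{3k+4}{2}\qquad\text{and}\qquad f(G_i)=\frac{3k-2}{2}+i\,\frac{3k-2}{2}.$$
   Context: All graphs are finite and simple. For a graph $G$, $n(G)$ denotes its number of vertices and $f(G)$ the minimum size of a feedback vertex set, i.e. of a set $F\subseteq V(G)$ such that $G-F$ contains no cycle. An ordering $\phi:V\to\{1,\dots,|V|\}$ (a bijection) is a $k$-elimination ordering if every vertex $v$ has at most $k$ neighbours $u$ with $\phi(u)<\phi(v)$. A graph is $k$-degenerate if it has a $k$-elimination ordering. *)

theory Defs
  imports Main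
begin

definition simple_graph :: "'a set \<Rightarrow> 'a set set \<Rightarrow> bool" where
  "simple_graph V E \<longleftrightarrow> finite V \<and> (\<forall>e\<in>E. e \<subseteq> V \<and> card e = 2)"

definition n_vertices :: "'a set \<Rightarrow> 'a set set \<Rightarrow> nat" where
  "n_vertices V E = card V"

definition is_cycle :: "'a set \<Rightarrow> 'a set set \<Rightarrow> 'a list \<Rightarrow> bool" where
  "is_cycle V E cs \<longleftrightarrow> length cs \<ge> 3 \<and> distinct cs \<and> set cs \<subseteq> V \<and>
     (\<forall>j < length cs. {cs ! j, cs ! ((j + 1) mod length cs)} \<in> E)"

definition has_cycle :: "'a set \<Rightarrow> 'a set set \<Rightarrow> bool" where
  "has_cycle V E \<longleftrightarrow> (\<exists>cs. is_cycle V E cs)"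

definition delete_vertices_E :: "'a set set \<Rightarrow> 'a set \<Rightarrow> 'a set set" where
  "delete_vertices_E E F = {e \<in> E. e \<inter> F = {}}"

definition is_fvs :: "'a set \<Rightarrow> 'a set set \<Rightarrow> 'a set \<Rightarrow> bool" where
  "is_fvs V E F \<longleftrightarrow> F \<subseteq> V \<and> \<not> has_cycle (V - F) (delete_vertices_E E F)"

definition fvs_number :: "'a set \<Rightarrow> 'a set set \<Rightarrow> nat" where
  "fvs_number V E = (LEAST m. \<exists>F. is_fvs V E F \<and> card F = m)"

definition elimination_ordering :: "nat \<Rightarrow> 'a set \<Rightarrow> 'a set set \<Rightarrow> ('a \<Rightarrow> nat) \<Rightarrow> bool" where
  "elimination_ordering k V E \<phi> \<longleftrightarrow> bij_betw \<phi> V {1..card V} \<and>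
     (\<forall>v\<in>V. card {u \<in> V. {u, v} \<in> E \<and> \<phi> u < \<phi> v} \<le> k)"

definition degenerate :: "nat \<Rightarrow> 'a set \<Rightarrow> 'a set set \<Rightarrow> bool" where
  "degenerate k V E \<longleftrightarrow> (\<exists>\<phi>. elimination_ordering k V E \<phi>)"

end

theory Submission
  imports Defs
begin

locale gr =
  fixes m i :: nat
  assumes m1: "1 \<le> m"
begin

definition N :: nat where "N = 3*m+2"
definition z :: nat where "z = Suc i * N"
definition VV :: "nat set" where "VV = {..z}"

definition arc :: "nat \<Rightarrow> nat \<Rightarrow> bool" where
  "arc u v \<longleftrightarrow> (u < z \<and> v < z \<and> (
     (u div N = v div N \<and> u mod N \<le> 2*m \<and> v mod N \<le> 2*m) \<or>
     (u div N = v div N \<and> 2*m < u mod N \<and> 2*m < v mod N) \<or>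
     (u div N = v div N \<and> u mod N = 3*m+1 \<and> v mod N < m) \<or>
     (u div N = v div N \<and> 2*m < u mod N \<and> u mod N \<le> 3*m \<and> m \<le> v mod N \<and> v mod N \<le> 2*m) \<or>
     (v div N = Suc (u div N) \<and> 2*m < u mod N \<and> v mod N < m))) \<or>
   (u = z \<and> v < N \<and> 2*m < v)"

definition adj :: "nat \<Rightarrow> nat \<Rightarrow> bool" where
  "adj u v \<longleftrightarrow> u \<noteq> v \<and> (arc u v \<or> arc v u)"

definition EE :: "nat set set" where
  "EE = {e. \<exists>u v. e = {u,v} \<and> adj u v}"

lemma N_pos: "0 < N" by (simp add: N_def)

lemma adj_sym: "adj u v = adj v u" by (auto simp: adj_def)

lemma adj_neq: "adj u v \<Longrightarrow> u \<noteq> v" by (simp add: adj_def)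

lemma arc_le: "arc u v \<Longrightarrow> u \<le> z \<and> v \<le> z"
  unfolding arc_def z_def by (auto simp: N_def)

lemma adj_VV: "adj u v \<Longrightarrow> u \<in> VV \<and> v \<in> VV"
  unfolding adj_def VV_def using arc_le by auto

lemma inE: "{u,v} \<in> EE \<longleftrightarrow> adj u v"
proof
  assume "{u,v} \<in> EE"
  then obtain a b where "{u,v} = {a,b}" "adj a b" unfolding EE_def by blast
  then show "adj u v" by (metis adj_sym doubleton_eq_iff)
qed (auto simp: EE_def)

lemma simple: "simple_graph VV EE"
  unfolding simple_graph_def
proof safe
  show "finite VV" by (simp add: VV_def)
next
  fix e x assume "e \<in> EE" "x \<in> e"
  then obtain u v where "e = {u,v}" "adj u v" unfolding EE_def by blast
  then show "x \<in> VV" using adj_VV \<open>x \<in> e\<close> by auto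
next
  fix e assume "e \<in> EE"
  then obtain u v where "e = {u,v}" "adj u v" unfolding EE_def by blast
  then show "card e = 2" using adj_neq by auto
qed

lemma card_VV: "card VV = Suc z" by (simp add: VV_def)

definition acyc :: "nat set \<Rightarrow> bool" where
  "acyc S \<longleftrightarrow> \<not> (\<exists>cs. 3 \<le> length cs \<and> distinct cs \<and> set cs \<subseteq> S \<and>
      (\<forall>j < length cs. adj (cs ! j) (cs ! ((j+1) mod length cs))))"

lemma fvs_acyc: "is_fvs VV EE F \<Longrightarrow> acyc (VV - F)"
  unfolding is_fvs_def has_cycle_def is_cycle_def acyc_def delete_vertices_E_def
proof (elim conjE, rule notI, elim exE conjE)
  fix cs assume F: "F \<subseteq> VV" and nc: "\<not> (\<exists>cs. 3 \<le> length cs \<and> distinct cs \<and> set cs \<subseteq> VV - F \<and>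
        (\<forall>j<length cs. {cs ! j, cs ! ((j + 1) mod length cs)} \<in> {e \<in> EE. e \<inter> F = {}}))"
    and c: "3 \<le> length cs" "distinct cs" "set cs \<subseteq> VV - F"
      "\<forall>j<length cs. adj (cs ! j) (cs ! ((j + 1) mod length cs))"
  have "\<forall>j<length cs. {cs ! j, cs ! ((j + 1) mod length cs)} \<in> {e \<in> EE. e \<inter> F = {}}"
  proof (intro allI impI)
    fix j assume j: "j < length cs"
    have "(j+1) mod length cs < length cs" using c(1) by (intro mod_less_divisor) auto
    then have "cs ! j \<in> VV - F" "cs ! ((j + 1) mod length cs) \<in> VV - F"
      using c(3) j nth_mem by blast+
    then show "{cs ! j, cs ! ((j + 1) mod length cs)} \<in> {e \<in> EE. e \<inter> F = {}}"
      using c(4) j inE by auto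
  qed
  then show False using nc c by blast
qed

lemma acyc_fvs: "F \<subseteq> VV \<Longrightarrow> acyc (VV - F) \<Longrightarrow> is_fvs VV EE F"
  unfolding is_fvs_def has_cycle_def is_cycle_def acyc_def delete_vertices_E_def
  using inE by auto

lemma tri: "a \<in> S \<Longrightarrow> b \<in> S \<Longrightarrow> c \<in> S \<Longrightarrow> adj a b \<Longrightarrow> adj b c \<Longrightarrow> adj c a \<Longrightarrow> \<not> acyc S"
  unfolding acyc_def
proof -
  assume h: "a \<in> S" "b \<in> S" "c \<in> S" "adj a b" "adj b c" "adj c a"
  then have d: "a \<noteq> b" "b \<noteq> c" "c \<noteq> a" using adj_neq by blast+
  have "\<forall>j < 3. adj ([a,b,c] ! j) ([a,b,c] ! ((j+1) mod 3))"
  proof (intro allI impI)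
    fix j :: nat assume "j < 3"
    then have "j = 0 \<or> j = 1 \<or> j = 2" by auto
    then show "adj ([a,b,c] ! j) ([a,b,c] ! ((j+1) mod 3))" using h by auto
  qed
  then show "\<not> \<not> (\<exists>cs. 3 \<le> length cs \<and> distinct cs \<and> set cs \<subseteq> S \<and>
      (\<forall>j < length cs. adj (cs ! j) (cs ! ((j+1) mod length cs))))"
    using h d by (intro notI, elim notE, intro exI[of _ "[a,b,c]"]) auto
qed

lemma quad: "a \<in> S \<Longrightarrow> b \<in> S \<Longrightarrow> c \<in> S \<Longrightarrow> d \<in> S \<Longrightarrow> a \<noteq> c \<Longrightarrow> b \<noteq> d \<Longrightarrow>
   adj a b \<Longrightarrow> adj b c \<Longrightarrow> adj c d \<Longrightarrow> adj d a \<Longrightarrow> \<not> acyc S"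
  unfolding acyc_def
proof -
  assume h: "a \<in> S" "b \<in> S" "c \<in> S" "d \<in> S" "a \<noteq> c" "b \<noteq> d" "adj a b" "adj b c" "adj c d" "adj d a"
  then have dd: "a \<noteq> b" "b \<noteq> c" "c \<noteq> d" "d \<noteq> a" using adj_neq by blast+
  have "\<forall>j < 4. adj ([a,b,c,d] ! j) ([a,b,c,d] ! ((j+1) mod 4))"
  proof (intro allI impI)
    fix j :: nat assume "j < 4"
    then have "j = 0 \<or> j = 1 \<or> j = 2 \<or> j = 3" by auto
    then show "adj ([a,b,c,d] ! j) ([a,b,c,d] ! ((j+1) mod 4))" using h by auto
  qed
  then show "\<not> \<not> (\<exists>cs. 3 \<le> length cs \<and> distinct cs \<and> set cs \<subseteq> S \<and>
      (\<forall>j < length cs. adj (cs ! j) (cs ! ((j+1) mod length cs))))"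
    using h dd by (intro notI, elim notE, intro exI[of _ "[a,b,c,d]"]) auto
qed

lemma three_elems: "3 \<le> card X \<Longrightarrow> \<exists>a b c. a \<in> X \<and> b \<in> X \<and> c \<in> X \<and> a \<noteq> b \<and> b \<noteq> c \<and> a \<noteq> c"
proof -
  assume "3 \<le> card X"
  then obtain a Y where "X = insert a Y" "a \<notin> Y" "2 \<le> card Y" "finite Y"
    by (metis card_le_Suc_iff numeral_3_eq_3 numeral_2_eq_2)
  moreover then obtain b W where "Y = insert b W" "b \<notin> W" "1 \<le> card W" "finite W"
    by (metis card_le_Suc_iff numeral_2_eq_2 One_nat_def)
  moreover then obtain c where "c \<in> W" by fastforce
  ultimately show ?thesis by blast
qed

lemma two_elems: "2 \<le> card X \<Longrightarrow> \<exists>a b. a \<in> X \<and> b \<in> X \<and> a \<noteq> b"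
  by (metis card_2_iff' card_le_Suc_iff numeral_2_eq_2 insert_iff One_nat_def card_gt_0_iff ex_in_conv le_imp_less_Suc less_one not_less_eq_eq)

lemma clique: "(\<And>x y. x \<in> K \<Longrightarrow> y \<in> K \<Longrightarrow> x \<noteq> y \<Longrightarrow> adj x y) \<Longrightarrow> acyc S \<Longrightarrow> card (S \<inter> K) \<le> 2"
proof (rule ccontr)
  assume K: "\<And>x y. x \<in> K \<Longrightarrow> y \<in> K \<Longrightarrow> x \<noteq> y \<Longrightarrow> adj x y" and a: "acyc S" and "\<not> card (S \<inter> K) \<le> 2"
  then obtain x y w where "x \<in> S \<inter> K" "y \<in> S \<inter> K" "w \<in> S \<inter> K" "x \<noteq> y" "y \<noteq> w" "x \<noteq> w"
    using three_elems[of "S \<inter> K"] by auto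
  then show False using tri[of x S y w] K a by auto
qed

end

context gr begin

lemma cover4:
  assumes "p \<in> S" "p' \<in> S" "q \<in> S" "q' \<in> S" "adj p p'" "adj q q'"
    "p \<noteq> q" "p \<noteq> q'" "p' \<noteq> q" "p' \<noteq> q'"
    "adj p q \<or> adj p q'" "adj p' q \<or> adj p' q'"
  shows "\<not> acyc S"
proof -
  have s: "adj a b \<Longrightarrow> adj b a" for a b using adj_sym by blast
  consider "adj p q" "adj p' q" | "adj p q'" "adj p' q'" | "adj p q" "adj p' q'" | "adj p q'" "adj p' q"
    using assms(11,12) by blast
  then show ?thesis
  proof cases
    case 1 then show ?thesis using tri[of p S p' q] assms s by blast
  next
    case 2 then show ?thesis using tri[of p S p' q'] assms s by blast
  next
    case 3 then show ?thesis using quad[of p S q q' p'] assms s by blast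
  next
    case 4 then show ?thesis using quad[of p S q' q p'] assms s by blast
  qed
qed

lemma decomp: "v div N * N + v mod N = v" by simp

lemma blkpos: "p < N \<Longrightarrow> (j*N + p) div N = j \<and> (j*N + p) mod N = p"
  using N_pos by simp

lemma pos_lt: "v mod N < N" using N_pos by simp

lemma eq_bp: "u div N = v div N \<Longrightarrow> u mod N = v mod N \<Longrightarrow> u = v"
  by (metis decomp)

definition A :: "nat \<Rightarrow> nat set" where "A j = {j*N ..< j*N + (2*m+1)}"
definition B :: "nat \<Rightarrow> nat set" where "B j = {j*N + (2*m+1) ..< Suc j * N}"

lemma memA: "x \<in> A j \<longleftrightarrow> x div N = j \<and> x mod N \<le> 2*m"
proof
  assume "x \<in> A j"
  then have "x = j*N + (x - j*N)" "x - j*N < 2*m+1" by (auto simp: A_def)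
  moreover have "2*m+1 < N" by (simp add: N_def)
  ultimately show "x div N = j \<and> x mod N \<le> 2*m" using blkpos
    by (metis Suc_eq_plus1 less_Suc_eq_le order.strict_trans)
next
  assume "x div N = j \<and> x mod N \<le> 2*m"
  then show "x \<in> A j" unfolding A_def using decomp[of x] by (auto simp: algebra_simps)
qed

lemma memB: "x \<in> B j \<longleftrightarrow> x div N = j \<and> 2*m < x mod N"
proof
  assume "x \<in> B j"
  then have "x = j*N + (x - j*N)" "x - j*N < N" "2*m < x - j*N" by (auto simp: B_def)
  then show "x div N = j \<and> 2*m < x mod N" using blkpos by metis
next
  assume h: "x div N = j \<and> 2*m < x mod N"
  then have "x = j*N + x mod N" using decomp[of x] by (auto simp: algebra_simps)
  then show "x \<in> B j" unfolding B_def using h pos_lt[of x] by (auto simp: algebra_simps)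
qed

lemma lt_z: "v div N \<le> i \<Longrightarrow> v < z"
proof -
  assume "v div N \<le> i"
  have e: "v = N * (v div N) + v mod N" by simp
  have f: "Suc (v div N) * N = N * (v div N) + N" by simp
  have "v < Suc (v div N) * N" using e f pos_lt[of v] by linarith
  also have "\<dots> \<le> Suc i * N" using \<open>v div N \<le> i\<close> by simp
  finally show ?thesis by (simp add: z_def)
qed

lemma cliqueA: "j \<le> i \<Longrightarrow> x \<in> A j \<Longrightarrow> y \<in> A j \<Longrightarrow> x \<noteq> y \<Longrightarrow> adj x y"
  unfolding adj_def arc_def memA using lt_z by auto

lemma cliqueB: "j \<le> i \<Longrightarrow> x \<in> B j \<Longrightarrow> y \<in> B j \<Longrightarrow> x \<noteq> y \<Longrightarrow> adj x y"
  unfolding adj_def arc_def memB using lt_z by auto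

lemma B0_small: "y \<in> B 0 \<Longrightarrow> y < N \<and> 2*m < y"
  unfolding B_def by auto

lemma z_notB0: "z \<notin> B 0" unfolding B_def z_def by auto

lemma cliqueZB: "x \<in> insert z (B 0) \<Longrightarrow> y \<in> insert z (B 0) \<Longrightarrow> x \<noteq> y \<Longrightarrow> adj x y"
proof -
  assume h: "x \<in> insert z (B 0)" "y \<in> insert z (B 0)" "x \<noteq> y"
  have zB: "w \<in> B 0 \<Longrightarrow> adj z w" for w using B0_small[of w] z_notB0 unfolding adj_def arc_def by auto
  show "adj x y"
  proof (cases "x = z")
    case True then show ?thesis using h zB by auto
  next
    case False
    show ?thesis
    proof (cases "y = z")
      case True then show ?thesis using h zB adj_sym False by auto
    next
      case False
      then show ?thesis using h \<open>x \<noteq> z\<close> cliqueB[of 0 x y] by auto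
    qed
  qed
qed

lemma R1:
  assumes j: "j < i" and a: "acyc S" and v: "v \<in> S" "v \<in> B j"
    and p: "p \<in> S" "p \<in> A (Suc j)" and p': "p' \<in> S" "p' \<in> A (Suc j)" and pp: "p \<noteq> p'"
    and q: "q \<in> S" "q \<in> B (Suc j)" and q': "q' \<in> S" "q' \<in> B (Suc j)" and qq: "q \<noteq> q'"
  shows False
proof -
  have ji: "Suc j \<le> i" using j by simp
  have app: "adj p p'" using cliqueA[OF ji p(2) p'(2) pp] .
  have aqq: "adj q q'" using cliqueB[OF ji q(2) q'(2) qq] .
  have bp: "p div N = Suc j" "p mod N \<le> 2*m" using p(2) memA by auto
  have bp': "p' div N = Suc j" "p' mod N \<le> 2*m" using p'(2) memA by auto
  have bq: "q div N = Suc j" "2*m < q mod N" "q mod N \<le> 3*m+1" using q(2) memB pos_lt[of q] by (auto simp: N_def)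
  have bq': "q' div N = Suc j" "2*m < q' mod N" "q' mod N \<le> 3*m+1" using q'(2) memB pos_lt[of q'] by (auto simp: N_def)
  have bv: "v div N = j" "2*m < v mod N" using v(2) memB by auto
  have zp: "p < z" "p' < z" "q < z" "q' < z" "v < z" using bp bp' bq bq' bv ji lt_z by auto
  have d: "p \<noteq> q" "p \<noteq> q'" "p' \<noteq> q" "p' \<noteq> q'" using bp bp' bq bq' by auto
  have cov: "adj x q \<or> adj x q'"
    if "x div N = Suc j" "x mod N \<le> 2*m" "x < z"
      "q div N = Suc j" "q mod N = 3*m+1" "q < z"
      "q' div N = Suc j" "2*m < q' mod N" "q' mod N \<le> 3*m" "q' < z" for x q q'
  proof (cases "x mod N < m")
    case True
    then have "arc q x" using that unfolding arc_def by auto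
    moreover have "x \<noteq> q" using that by auto
    ultimately show ?thesis unfolding adj_def by auto
  next
    case False
    then have "arc q' x" using that unfolding arc_def by auto
    moreover have "x \<noteq> q'" using that by auto
    ultimately show ?thesis unfolding adj_def by auto
  qed
  have hr: "adj x q" if "x div N = Suc j" "m \<le> x mod N" "x mod N \<le> 2*m" "x < z"
      "q div N = Suc j" "2*m < q mod N" "q mod N \<le> 3*m" "q < z" for x q
  proof -
    have "arc q x" using that unfolding arc_def by auto
    moreover have "x \<noteq> q" using that by auto
    ultimately show ?thesis unfolding adj_def by auto
  qed
  have s: "adj a b \<Longrightarrow> adj b a" for a b using adj_sym by blast
  consider "q mod N = 3*m+1" | "q' mod N = 3*m+1" | "q mod N \<le> 3*m" "q' mod N \<le> 3*m"
    using bq bq' by linarith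
  then show False
  proof cases
    case 1
    then have "q' mod N \<noteq> 3*m+1" using eq_bp[of q q'] bq bq' qq by auto
    then have "q' mod N \<le> 3*m" using bq' by auto
    then show False
      using cover4[of p S p' q q'] p p' q q' app aqq d cov[of p q q'] cov[of p' q q'] bp bp' bq bq' zp a 1
      by blast
  next
    case 2
    then have "q mod N \<noteq> 3*m+1" using eq_bp[of q q'] bq bq' qq by auto
    then have "q mod N \<le> 3*m" using bq by auto
    then show False
      using cover4[of p S p' q' q] p p' q q' app aqq s d cov[of p q' q] cov[of p' q' q] bp bp' bq bq' zp a 2
      by blast
  next
    case 3
    show False
    proof (cases "m \<le> p mod N")
      case True
      then show False using tri[of p S q q'] hr[of p q] hr[of p q'] 3 bp bq bq' zp p q q' aqq s a by blast
    next
      case False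
      show False
      proof (cases "m \<le> p' mod N")
        case True
        then show False using tri[of p' S q q'] hr[of p' q] hr[of p' q'] 3 bp' bq bq' zp p' q q' aqq s a by blast
      next
        case False2: False
        have "arc v p" using False bp bv zp unfolding arc_def by auto
        moreover have "arc v p'" using False2 bp' bv zp unfolding arc_def by auto
        moreover have "v \<noteq> p" "v \<noteq> p'" using bv bp bp' by auto
        ultimately have "adj v p" "adj p' v" unfolding adj_def by auto
        then show False using tri[of v S p p'] v p p' app a by blast
      qed
    qed
  qed
qed

end

context gr begin

lemma card_R1:
  assumes j: "j < i" and a: "acyc S" and ne: "S \<inter> B j \<noteq> {}"
  shows "card (S \<inter> A (Suc j)) + card (S \<inter> B (Suc j)) \<le> 3"
proof -
  have ji: "Suc j \<le> i" using j by simp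
  have cA: "card (S \<inter> A (Suc j)) \<le> 2" using clique[OF cliqueA[OF ji] a] by blast
  have cB: "card (S \<inter> B (Suc j)) \<le> 2" using clique[OF cliqueB[OF ji] a] by blast
  obtain v where v: "v \<in> S" "v \<in> B j" using ne by blast
  show ?thesis
  proof (rule ccontr)
    assume "\<not> ?thesis"
    then have "2 \<le> card (S \<inter> A (Suc j))" "2 \<le> card (S \<inter> B (Suc j))" using cA cB by linarith+
    then obtain p p' q q' where "p \<in> S \<inter> A (Suc j)" "p' \<in> S \<inter> A (Suc j)" "p \<noteq> p'"
      "q \<in> S \<inter> B (Suc j)" "q' \<in> S \<inter> B (Suc j)" "q \<noteq> q'"
      using two_elems by metis
    then show False using R1[OF j a v] by blast
  qed
qed

definition Pre :: "nat \<Rightarrow> nat set" where "Pre j = {..<Suc j * N} \<union> {z}"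

lemma Pre0: "Pre 0 = A 0 \<union> insert z (B 0)"
  unfolding Pre_def A_def B_def by (auto simp: N_def)

lemma PreS: "Pre (Suc j) = Pre j \<union> A (Suc j) \<union> B (Suc j)"
  unfolding Pre_def A_def B_def by (auto simp: N_def)

lemma Prei: "Pre i = VV"
  unfolding Pre_def VV_def z_def by auto

lemma bound:
  assumes a: "acyc S"
  shows "j \<le> i \<Longrightarrow> card (S \<inter> Pre j) \<le> 3*j+4 \<and> (S \<inter> B j = {} \<longrightarrow> card (S \<inter> Pre j) \<le> 3*j+3)"
proof (induction j)
  case 0
  have cA: "card (S \<inter> A 0) \<le> 2" using clique[OF cliqueA[of 0] a] by blast
  have cZ: "card (S \<inter> insert z (B 0)) \<le> 2" using clique[OF cliqueZB a] by blast
  have e: "S \<inter> Pre 0 = (S \<inter> A 0) \<union> (S \<inter> insert z (B 0))" using Pre0 by auto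
  have c: "card (S \<inter> Pre 0) \<le> card (S \<inter> A 0) + card (S \<inter> insert z (B 0))"
    unfolding e by (rule card_Un_le)
  have "S \<inter> B 0 = {} \<Longrightarrow> card (S \<inter> insert z (B 0)) \<le> 1"
  proof -
    assume "S \<inter> B 0 = {}"
    then have "S \<inter> insert z (B 0) \<subseteq> {z}" by auto
    then show ?thesis by (metis card.empty card.insert card_mono finite.emptyI finite.insertI empty_iff One_nat_def)
  qed
  then show ?case using c cA cZ by auto
next
  case (Suc j)
  then have ji: "j < i" "Suc j \<le> i" by auto
  have cA: "card (S \<inter> A (Suc j)) \<le> 2" using clique[OF cliqueA[OF ji(2)] a] by blast
  have cB: "card (S \<inter> B (Suc j)) \<le> 2" using clique[OF cliqueB[OF ji(2)] a] by blast
  have e: "S \<inter> Pre (Suc j) = ((S \<inter> Pre j) \<union> (S \<inter> A (Suc j))) \<union> (S \<inter> B (Suc j))" using PreS by auto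
  have c: "card (S \<inter> Pre (Suc j)) \<le> card (S \<inter> Pre j) + card (S \<inter> A (Suc j)) + card (S \<inter> B (Suc j))"
    unfolding e by (meson add_right_mono card_Un_le order_trans)
  have IH: "card (S \<inter> Pre j) \<le> 3*j+4" "S \<inter> B j = {} \<Longrightarrow> card (S \<inter> Pre j) \<le> 3*j+3"
    using Suc.IH ji by auto
  have "card (S \<inter> Pre (Suc j)) \<le> 3 * Suc j + 4"
  proof (cases "S \<inter> B j = {}")
    case True then show ?thesis using IH c cA cB by auto
  next
    case False then show ?thesis using IH c card_R1[OF ji(1) a False] by auto
  qed
  moreover have "S \<inter> B (Suc j) = {} \<Longrightarrow> card (S \<inter> Pre (Suc j)) \<le> 3 * Suc j + 3"
    using IH c cA by auto
  ultimately show ?case by blast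
qed

lemma forest_bound: "acyc S \<Longrightarrow> S \<subseteq> VV \<Longrightarrow> card S \<le> 3*i+4"
  using bound[of S i] Prei by (metis inf.absorb1 order_refl)

end

lemma arith_S0:
  fixes ba pa bv pv m :: nat
  assumes D: "((ba = bv \<and> pa \<le> 2*m \<and> pv \<le> 2*m) \<or>
     (ba = bv \<and> 2*m < pa \<and> 2*m < pv) \<or>
     (ba = bv \<and> pa = 3*m+1 \<and> pv < m) \<or>
     (ba = bv \<and> 2*m < pa \<and> pa \<le> 3*m \<and> m \<le> pv \<and> pv \<le> 2*m) \<or>
     (bv = Suc ba \<and> 2*m < pa \<and> pv < m)) \<or> (
     (bv = ba \<and> pv \<le> 2*m \<and> pa \<le> 2*m) \<or>
     (bv = ba \<and> 2*m < pv \<and> 2*m < pa) \<or>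
     (bv = ba \<and> pv = 3*m+1 \<and> pa < m) \<or>
     (bv = ba \<and> 2*m < pv \<and> pv \<le> 3*m \<and> m \<le> pa \<and> pa \<le> 2*m) \<or>
     (ba = Suc bv \<and> 2*m < pv \<and> pa < m))"
   and pa: "pa = 0 \<or> pa = m \<or> pa = 3*m+1" and pv: "pv = 0 \<or> pv = m \<or> pv = 3*m+1"
   and bm: "ba \<le> bv" and sl: "ba = bv \<Longrightarrow> pa < pv" and m1: "1 \<le> m"
  shows "(pv = 0 \<longrightarrow> Suc ba = bv \<and> pa = 3*m+1) \<and> (pv \<noteq> 0 \<longrightarrow> ba = bv \<and> pa = 0)"
  using pv
proof (elim disjE)
  assume "pv = 0" then show ?thesis using D pa bm sl m1 by auto
next
  assume "pv = m" then show ?thesis using D pa bm sl m1 by auto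
next
  assume "pv = 3*m+1" then show ?thesis using D pa bm sl m1 by auto
qed

context gr begin

lemma arc_lt: "u < z \<Longrightarrow> v < z \<Longrightarrow> arc u v \<longleftrightarrow> (
     (u div N = v div N \<and> u mod N \<le> 2*m \<and> v mod N \<le> 2*m) \<or>
     (u div N = v div N \<and> 2*m < u mod N \<and> 2*m < v mod N) \<or>
     (u div N = v div N \<and> u mod N = 3*m+1 \<and> v mod N < m) \<or>
     (u div N = v div N \<and> 2*m < u mod N \<and> u mod N \<le> 3*m \<and> m \<le> v mod N \<and> v mod N \<le> 2*m) \<or>
     (v div N = Suc (u div N) \<and> 2*m < u mod N \<and> v mod N < m))"
  unfolding arc_def by auto

lemma ord_acyc:
  assumes h: "\<And>v a b. v \<in> S \<Longrightarrow> a \<in> S \<Longrightarrow> b \<in> S \<Longrightarrow> a < v \<Longrightarrow> b < v \<Longrightarrow> adj a v \<Longrightarrow> adj b v \<Longrightarrow> a = b"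
  shows "acyc S"
  unfolding acyc_def
proof
  assume "\<exists>cs. 3 \<le> length cs \<and> distinct cs \<and> set cs \<subseteq> S \<and>
      (\<forall>j < length cs. adj (cs ! j) (cs ! ((j+1) mod length cs)))"
  then obtain cs where c: "3 \<le> length cs" "distinct cs" "set cs \<subseteq> S"
    "\<forall>j < length cs. adj (cs ! j) (cs ! ((j+1) mod length cs))" by blast
  define L where "L = length cs"
  have L3: "3 \<le> L" using c(1) L_def by simp
  define M where "M = Max (set cs)"
  have "M \<in> set cs" unfolding M_def using L3 L_def by (intro Max_in) auto
  then obtain p where p: "p < L" "cs ! p = M" unfolding L_def by (metis in_set_conv_nth)
  define q where "q = (if p = 0 then L - 1 else p - 1)"
  define r where "r = (if p = L - 1 then 0 else p + 1)"
  have q: "q < L" "(q+1) mod L = p" "q \<noteq> p" using p L3 unfolding q_def by auto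
  have r: "r < L" "(p+1) mod L = r" "r \<noteq> p" using p L3 unfolding r_def by auto
  have qr: "q \<noteq> r" using p L3 unfolding q_def r_def by auto
  have e1: "adj (cs ! q) M" using c(4) q p unfolding L_def by metis
  have e2: "adj (cs ! r) M" using c(4) r p adj_sym unfolding L_def by metis
  have ne: "cs ! q \<noteq> cs ! r" "cs ! q \<noteq> M" "cs ! r \<noteq> M"
    using c(2) q r qr p unfolding L_def by (auto simp: nth_eq_iff_index_eq)
  have le: "cs ! q \<le> M" "cs ! r \<le> M" unfolding M_def using q(1) r(1) L_def by auto
  have inS: "cs ! q \<in> S" "cs ! r \<in> S" "M \<in> S" using c(3) q(1) r(1) p unfolding L_def
    by (auto dest: nth_mem)
  show False using h[OF inS(3) inS(1) inS(2) _ _ e1 e2] ne le by auto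
qed

definition S0 :: "nat set" where
  "S0 = insert z ((\<lambda>j. j*N) ` {..i} \<union> (\<lambda>j. j*N+m) ` {..i} \<union> (\<lambda>j. j*N+(3*m+1)) ` {..i})"

lemma NN: "m < N" "3*m+1 < N" "2*m+1 < N" using m1 by (auto simp: N_def)

lemma S0_elem: "a \<in> S0 \<Longrightarrow> a \<noteq> z \<Longrightarrow> a < z \<and> (a mod N = 0 \<or> a mod N = m \<or> a mod N = 3*m+1)"
proof -
  assume "a \<in> S0" "a \<noteq> z"
  then obtain l c where l: "l \<le> i" "a = l*N + c" "c = 0 \<or> c = m \<or> c = 3*m+1"
    unfolding S0_def by auto
  have "c < N" using l(3) NN N_pos by auto
  then have "a div N = l" "a mod N = c" using blkpos l(2) by auto
  then show ?thesis using l lt_z by auto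
qed

lemma blk_mono: "a < v \<Longrightarrow> a div N \<le> v div N" by (simp add: div_le_mono)

lemma same_blk_lt: "a div N = v div N \<Longrightarrow> a < v \<Longrightarrow> a mod N < v mod N"
  by (metis decomp nat_add_left_cancel_less)

lemma S0_pred:
  assumes v: "v \<in> S0" and a: "a \<in> S0" and av: "a < v" and adj: "adj a v"
  shows "(v = z \<longrightarrow> a div N = 0 \<and> a mod N = 3*m+1) \<and>
         (v \<noteq> z \<and> v mod N = 0 \<longrightarrow> Suc (a div N) = v div N \<and> a mod N = 3*m+1) \<and>
         (v \<noteq> z \<and> v mod N \<noteq> 0 \<longrightarrow> a div N = v div N \<and> a mod N = 0)"
proof -
  have az: "a \<noteq> z" using av v S0_elem[of v] by (cases "v = z") auto
  from S0_elem[OF a az] have aa: "a < z" "a mod N = 0 \<or> a mod N = m \<or> a mod N = 3*m+1" by auto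
  have bm: "a div N \<le> v div N" using blk_mono[OF av] .
  have sl: "a div N = v div N \<Longrightarrow> a mod N < v mod N" using same_blk_lt av by blast
  show ?thesis
  proof (cases "v = z")
    case True
    then have "arc z a" using adj av unfolding adj_def arc_def by auto
    then have "a < N" "2*m < a" unfolding arc_def by auto
    then show ?thesis using True aa by auto
  next
    case False
    from S0_elem[OF v False] have vv: "v < z" "v mod N = 0 \<or> v mod N = m \<or> v mod N = 3*m+1" by auto
    have "arc a v \<or> arc v a" using adj unfolding adj_def by auto
    then have D: "((a div N = v div N \<and> a mod N \<le> 2*m \<and> v mod N \<le> 2*m) \<or>
     (a div N = v div N \<and> 2*m < a mod N \<and> 2*m < v mod N) \<or>
     (a div N = v div N \<and> a mod N = 3*m+1 \<and> v mod N < m) \<or>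
     (a div N = v div N \<and> 2*m < a mod N \<and> a mod N \<le> 3*m \<and> m \<le> v mod N \<and> v mod N \<le> 2*m) \<or>
     (v div N = Suc (a div N) \<and> 2*m < a mod N \<and> v mod N < m)) \<or> (
     (v div N = a div N \<and> v mod N \<le> 2*m \<and> a mod N \<le> 2*m) \<or>
     (v div N = a div N \<and> 2*m < v mod N \<and> 2*m < a mod N) \<or>
     (v div N = a div N \<and> v mod N = 3*m+1 \<and> a mod N < m) \<or>
     (v div N = a div N \<and> 2*m < v mod N \<and> v mod N \<le> 3*m \<and> m \<le> a mod N \<and> a mod N \<le> 2*m) \<or>
     (a div N = Suc (v div N) \<and> 2*m < v mod N \<and> a mod N < m))"
      unfolding arc_lt[OF aa(1) vv(1)] arc_lt[OF vv(1) aa(1)] .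
    have "(v mod N = 0 \<longrightarrow> Suc (a div N) = v div N \<and> a mod N = 3*m+1) \<and> (v mod N \<noteq> 0 \<longrightarrow> a div N = v div N \<and> a mod N = 0)"
      using arith_S0[where ba="a div N" and pa="a mod N" and bv="v div N" and pv="v mod N" and m=m, OF D aa(2) vv(2) bm sl m1] .
    then show ?thesis using False by simp
  qed
qed

lemma S0_acyc: "acyc S0"
proof (rule ord_acyc)
  fix v a b assume h: "v \<in> S0" "a \<in> S0" "b \<in> S0" "a < v" "b < v" "adj a v" "adj b v"
  have A: "(v = z \<longrightarrow> a div N = 0 \<and> a mod N = 3*m+1) \<and>
         (v \<noteq> z \<and> v mod N = 0 \<longrightarrow> Suc (a div N) = v div N \<and> a mod N = 3*m+1) \<and>
         (v \<noteq> z \<and> v mod N \<noteq> 0 \<longrightarrow> a div N = v div N \<and> a mod N = 0)"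
    using S0_pred[OF h(1) h(2) h(4) h(6)] .
  have B: "(v = z \<longrightarrow> b div N = 0 \<and> b mod N = 3*m+1) \<and>
         (v \<noteq> z \<and> v mod N = 0 \<longrightarrow> Suc (b div N) = v div N \<and> b mod N = 3*m+1) \<and>
         (v \<noteq> z \<and> v mod N \<noteq> 0 \<longrightarrow> b div N = v div N \<and> b mod N = 0)"
    using S0_pred[OF h(1) h(3) h(5) h(7)] .
  have "a div N = b div N \<and> a mod N = b mod N"
  proof (cases "v = z")
    case True then show ?thesis using A B by (metis (no_types, lifting))
  next
    case False
    show ?thesis
    proof (cases "v mod N = 0")
      case True then show ?thesis using A B False by (metis (no_types, lifting) Suc_inject)
    next
      case F2: False then show ?thesis using A B False by (metis (no_types, lifting))
    qed
  qed
  then show "a = b" using eq_bp by blast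
qed

lemma S0_sub: "S0 \<subseteq> VV"
proof
  fix a assume "a \<in> S0"
  then show "a \<in> VV" using S0_elem[of a] unfolding VV_def by (cases "a = z") auto
qed

end

definition Q1 :: "nat \<Rightarrow> nat \<Rightarrow> nat set" where
  "Q1 m p = (if p \<le> 2*m then {..<p} else if p \<le> 3*m then {m..<p} else {..<m} \<union> {2*m<..<3*m+1})"
definition Q2 :: "nat \<Rightarrow> nat \<Rightarrow> nat set" where
  "Q2 m p = (if p < m then {2*m<..<3*m+2} else {})"

lemma Q_fin: "finite (Q1 m p)" "finite (Q2 m p)" unfolding Q1_def Q2_def by auto

lemma Q_card: "p \<le> 3*m+1 \<Longrightarrow> 1 \<le> m \<Longrightarrow> card (Q1 m p) + card (Q2 m p) \<le> 2*m"
proof -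
  assume p: "p \<le> 3*m+1" and m: "1 \<le> m"
  have c3: "card ({..<m} \<union> {2*m<..<3*m+1}) \<le> m + m"
    using card_Un_le[of "{..<m}" "{2*m<..<3*m+1}"] by simp
  show ?thesis unfolding Q1_def Q2_def using p m c3 by auto
qed

lemma arith_back:
  fixes bu pu bv pv m :: nat
  assumes D: "((bu = bv \<and> pu \<le> 2*m \<and> pv \<le> 2*m) \<or>
     (bu = bv \<and> 2*m < pu \<and> 2*m < pv) \<or>
     (bu = bv \<and> pu = 3*m+1 \<and> pv < m) \<or>
     (bu = bv \<and> 2*m < pu \<and> pu \<le> 3*m \<and> m \<le> pv \<and> pv \<le> 2*m) \<or>
     (bv = Suc bu \<and> 2*m < pu \<and> pv < m)) \<or> (
     (bv = bu \<and> pv \<le> 2*m \<and> pu \<le> 2*m) \<or>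
     (bv = bu \<and> 2*m < pv \<and> 2*m < pu) \<or>
     (bv = bu \<and> pv = 3*m+1 \<and> pu < m) \<or>
     (bv = bu \<and> 2*m < pv \<and> pv \<le> 3*m \<and> m \<le> pu \<and> pu \<le> 2*m) \<or>
     (bu = Suc bv \<and> 2*m < pv \<and> pu < m))"
   and bm: "bu \<le> bv" and sl: "bu = bv \<Longrightarrow> pu < pv" and pv: "pv \<le> 3*m+1" and pu: "pu \<le> 3*m+1"
  shows "(bu = bv \<and> pu \<in> Q1 m pv) \<or> (Suc bu = bv \<and> pu \<in> Q2 m pv)"
  using D
proof (elim disjE)
qed (use bm sl pv pu in \<open>auto simp: Q1_def Q2_def\<close>)

context gr begin

lemma card_blk: "finite Q \<Longrightarrow> finite {u. u div N = j \<and> u mod N \<in> Q} \<and> card {u. u div N = j \<and> u mod N \<in> Q} \<le> card Q"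
proof -
  assume f: "finite Q"
  have s: "{u. u div N = j \<and> u mod N \<in> Q} \<subseteq> (\<lambda>q. j*N + q) ` Q"
  proof
    fix u assume "u \<in> {u. u div N = j \<and> u mod N \<in> Q}"
    then show "u \<in> (\<lambda>q. j*N + q) ` Q" using decomp[of u] by (intro image_eqI[of _ _ "u mod N"]) auto
  qed
  show ?thesis using finite_subset[OF s] card_mono[OF _ s] card_image_le[OF f, of "\<lambda>q. j*N + q"] f
    by (meson finite_imageI order_trans)
qed

lemma card_blk2: "finite Q \<Longrightarrow> finite {u. Suc (u div N) = j \<and> u mod N \<in> Q} \<and> card {u. Suc (u div N) = j \<and> u mod N \<in> Q} \<le> card Q"
proof -
  assume f: "finite Q"
  have s: "{u. Suc (u div N) = j \<and> u mod N \<in> Q} \<subseteq> (\<lambda>q. (j - 1)*N + q) ` Q"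
  proof
    fix u assume "u \<in> {u. Suc (u div N) = j \<and> u mod N \<in> Q}"
    then show "u \<in> (\<lambda>q. (j - 1)*N + q) ` Q" using decomp[of u] by (intro image_eqI[of _ _ "u mod N"]) auto
  qed
  show ?thesis using finite_subset[OF s] card_mono[OF _ s] card_image_le[OF f, of "\<lambda>q. (j - 1)*N + q"] f
    by (meson finite_imageI order_trans)
qed

lemma back_lt:
  assumes v: "v < z" and u: "u < v" and a: "adj u v"
  shows "(u div N = v div N \<and> u mod N \<in> Q1 m (v mod N)) \<or> (Suc (u div N) = v div N \<and> u mod N \<in> Q2 m (v mod N))"
proof -
  have uz: "u < z" using u v by simp
  have "arc u v \<or> arc v u" using a unfolding adj_def by auto
  then have D: "((u div N = v div N \<and> u mod N \<le> 2*m \<and> v mod N \<le> 2*m) \<or>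
     (u div N = v div N \<and> 2*m < u mod N \<and> 2*m < v mod N) \<or>
     (u div N = v div N \<and> u mod N = 3*m+1 \<and> v mod N < m) \<or>
     (u div N = v div N \<and> 2*m < u mod N \<and> u mod N \<le> 3*m \<and> m \<le> v mod N \<and> v mod N \<le> 2*m) \<or>
     (v div N = Suc (u div N) \<and> 2*m < u mod N \<and> v mod N < m)) \<or> (
     (v div N = u div N \<and> v mod N \<le> 2*m \<and> u mod N \<le> 2*m) \<or>
     (v div N = u div N \<and> 2*m < v mod N \<and> 2*m < u mod N) \<or>
     (v div N = u div N \<and> v mod N = 3*m+1 \<and> u mod N < m) \<or>
     (v div N = u div N \<and> 2*m < v mod N \<and> v mod N \<le> 3*m \<and> m \<le> u mod N \<and> u mod N \<le> 2*m) \<or>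
     (u div N = Suc (v div N) \<and> 2*m < v mod N \<and> u mod N < m))"
    unfolding arc_lt[OF uz v] arc_lt[OF v uz] .
  have pv: "v mod N \<le> 3*m+1" "u mod N \<le> 3*m+1" using pos_lt[of v] pos_lt[of u] by (auto simp: N_def)
  show ?thesis
    using arith_back[where bu="u div N" and pu="u mod N" and bv="v div N" and pv="v mod N" and m=m,
        OF D blk_mono[OF u] same_blk_lt[OF _ u] pv] .
qed

lemma back_z: "u < z \<Longrightarrow> adj u z \<Longrightarrow> u \<in> {2*m<..<N}"
  unfolding adj_def arc_def by auto

lemma degen: "degenerate (2*m) VV EE"
  unfolding degenerate_def elimination_ordering_def
proof (intro exI[of _ Suc] conjI ballI)
  show "bij_betw Suc VV {1..card VV}"
    unfolding card_VV VV_def bij_betw_def by (simp add: image_Suc_atMost atLeast1_atMost_eq_remove0)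
next
  fix v assume vV: "v \<in> VV"
  have eq: "{u \<in> VV. {u, v} \<in> EE \<and> Suc u < Suc v} = {u \<in> VV. adj u v \<and> u < v}"
    using inE by auto
  show "card {u \<in> VV. {u, v} \<in> EE \<and> Suc u < Suc v} \<le> 2*m"
    unfolding eq
  proof (cases "v = z")
    case True
    have "{u \<in> VV. adj u v \<and> u < v} \<subseteq> {2*m<..<N}" using back_z True by auto
    then have "card {u \<in> VV. adj u v \<and> u < v} \<le> card {2*m<..<N}" by (intro card_mono) auto
    also have "\<dots> \<le> 2*m" using m1 by (simp add: N_def)
    finally show "card {u \<in> VV. adj u v \<and> u < v} \<le> 2*m" .
  next
    case False
    then have vz: "v < z" using vV by (simp add: VV_def)
    let ?T1 = "{u. u div N = v div N \<and> u mod N \<in> Q1 m (v mod N)}"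
    let ?T2 = "{u. Suc (u div N) = v div N \<and> u mod N \<in> Q2 m (v mod N)}"
    have c1: "finite ?T1" "card ?T1 \<le> card (Q1 m (v mod N))" using card_blk[OF Q_fin(1)] by blast+
    have c2: "finite ?T2" "card ?T2 \<le> card (Q2 m (v mod N))" using card_blk2[OF Q_fin(2)] by blast+
    have "{u \<in> VV. adj u v \<and> u < v} \<subseteq> ?T1 \<union> ?T2" using back_lt[OF vz] by blast
    then have "card {u \<in> VV. adj u v \<and> u < v} \<le> card (?T1 \<union> ?T2)" using c1 c2 by (intro card_mono) auto
    also have "\<dots> \<le> card ?T1 + card ?T2" by (rule card_Un_le)
    also have "\<dots> \<le> 2*m" using c1 c2 Q_card[OF _ m1, of "v mod N"] pos_lt[of v] by (simp add: N_def)
    finally show "card {u \<in> VV. adj u v \<and> u < v} \<le> 2*m" .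
  qed
qed

lemma card_S0: "card S0 = 3*i+4"
proof -
  let ?X0 = "(\<lambda>j. j*N) ` {..i}" and ?X1 = "(\<lambda>j. j*N+m) ` {..i}" and ?X2 = "(\<lambda>j. j*N+(3*m+1)) ` {..i}"
  have inj: "inj_on (\<lambda>j. j*N + c) {..i}" for c by (rule inj_onI) (use N_pos in auto)
  have inj0: "inj_on (\<lambda>j. j*N) {..i}" by (rule inj_onI) (use N_pos in auto)
  have c0: "card ?X0 = Suc i" using card_image[OF inj0] by simp
  have c1: "card ?X1 = Suc i" using card_image[OF inj[of m]] by simp
  have c2: "card ?X2 = Suc i" using card_image[OF inj[of "3*m+1"]] by simp
  have md: "(j*N + c) mod N = c" if "c < N" for j c using blkpos[OF that] by simp
  have lz: "j*N + c < z" if "j \<le> i" "c < N" for j c using lt_z blkpos[OF that(2)] that(1) by metis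
  have d01: "?X0 \<inter> ?X1 = {}"
  proof (rule equals0I)
    fix x assume "x \<in> ?X0 \<inter> ?X1"
    then obtain j l where e: "x = j*N" "x = l*N + m" by blast
    have "x mod N = 0" using e(1) by simp
    moreover have "x mod N = m" using e(2) md[of m l] NN(1) by simp
    ultimately show False using m1 by simp
  qed
  have d02: "?X0 \<inter> ?X2 = {}"
  proof (rule equals0I)
    fix x assume "x \<in> ?X0 \<inter> ?X2"
    then obtain j l where e: "x = j*N" "x = l*N + (3*m+1)" by blast
    have "x mod N = 0" using e(1) by simp
    moreover have "x mod N = 3*m+1" using e(2) md[of "3*m+1" l] NN(2) by simp
    ultimately show False by simp
  qed
  have d12: "?X1 \<inter> ?X2 = {}"
  proof (rule equals0I)
    fix x assume "x \<in> ?X1 \<inter> ?X2"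
    then obtain j l where e: "x = j*N + m" "x = l*N + (3*m+1)" by blast
    have "x mod N = m" using e(1) md[of m j] NN(1) by simp
    moreover have "x mod N = 3*m+1" using e(2) md[of "3*m+1" l] NN(2) by simp
    ultimately show False by simp
  qed
  have zn0: "z \<notin> ?X0"
  proof
    assume "z \<in> ?X0"
    then obtain j where "j \<le> i" "z = j*N" by blast
    then show False using lz[of j 0] N_pos by simp
  qed
  have zn1: "z \<notin> ?X1"
  proof
    assume "z \<in> ?X1"
    then obtain j where "j \<le> i" "z = j*N + m" by blast
    then show False using lz[of j m] NN(1) by simp
  qed
  have zn2: "z \<notin> ?X2"
  proof
    assume "z \<in> ?X2"
    then obtain j where "j \<le> i" "z = j*N + (3*m+1)" by blast
    then show False using lz[of j "3*m+1"] NN(2) by simp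
  qed
  have fin: "finite ?X0" "finite ?X1" "finite ?X2" by auto
  have "card (?X0 \<union> ?X1) = 2 * Suc i" using card_Un_disjoint[OF fin(1) fin(2) d01] c0 c1 by simp
  moreover have "(?X0 \<union> ?X1) \<inter> ?X2 = {}" using d02 d12 by blast
  ultimately have "card (?X0 \<union> ?X1 \<union> ?X2) = 3 * Suc i"
    using card_Un_disjoint[of "?X0 \<union> ?X1" ?X2] fin c2 by simp
  moreover have "z \<notin> ?X0 \<union> ?X1 \<union> ?X2" using zn0 zn1 zn2 by blast
  ultimately have "card (insert z (?X0 \<union> ?X1 \<union> ?X2)) = Suc (3 * Suc i)"
    using fin by (simp add: card_insert_disjoint)
  then show ?thesis unfolding S0_def by simp
qed

end

lemma arith_main:
  fixes m i :: nat assumes "1 \<le> m"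
  shows "Suc (Suc i * (3*m+2)) = (3 * (2*m) + 6) div 2 + i * ((3 * (2*m) + 4) div 2)"
    and "Suc (Suc i * (3*m+2)) - (3*i+4) = (3 * (2*m) - 2) div 2 + i * ((3 * (2*m) - 2) div 2)"
proof -
  obtain m' where m: "m = Suc m'" using assms by (cases m) auto
  show "Suc (Suc i * (3*m+2)) = (3 * (2*m) + 6) div 2 + i * ((3 * (2*m) + 4) div 2)"
    unfolding m by simp
  have e: "(3 * (2*m) - 2) div 2 = 3*m'+2" unfolding m by simp
  show "Suc (Suc i * (3*m+2)) - (3*i+4) = (3 * (2*m) - 2) div 2 + i * ((3 * (2*m) - 2) div 2)"
    unfolding e unfolding m by (simp add: algebra_simps)
qed

theorem mainTheorem1:
  fixes k :: nat
  assumes "even k" and "k \<ge> 2"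
  shows "\<exists>(V :: nat \<Rightarrow> nat set) (E :: nat \<Rightarrow> nat set set). \<forall>i::nat.
           simple_graph (V i) (E i) \<and> degenerate k (V i) (E i) \<and>
           n_vertices (V i) (E i) = (3 * k + 6) div 2 + i * ((3 * k + 4) div 2) \<and>
           fvs_number (V i) (E i) = (3 * k - 2) div 2 + i * ((3 * k - 2) div 2)"
proof -
  obtain m where k: "k = 2*m" using assms(1) by (auto elim: evenE)
  have m1: "1 \<le> m" using assms(2) k by simp
  show ?thesis
  proof (intro exI[of _ "\<lambda>i. gr.VV m i"] exI[of _ "\<lambda>i. gr.EE m i"] allI)
    fix i
    interpret g: gr m i using m1 by unfold_locales
    have s: "simple_graph g.VV g.EE" by (rule g.simple)
    have d: "degenerate k g.VV g.EE" unfolding k by (rule g.degen)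
    have n: "n_vertices g.VV g.EE = (3 * k + 6) div 2 + i * ((3 * k + 4) div 2)"
      unfolding n_vertices_def g.card_VV g.z_def g.N_def k using arith_main(1)[OF m1] by simp
    let ?T = "(3 * k - 2) div 2 + i * ((3 * k - 2) div 2)"
    have T: "Suc g.z - (3*i+4) = ?T" unfolding g.z_def g.N_def k using arith_main(2)[OF m1] by simp
    have f: "fvs_number g.VV g.EE = ?T"
      unfolding fvs_number_def
    proof (rule Least_equality)
      have sub: "g.VV - g.S0 \<subseteq> g.VV" by blast
      have eq: "g.VV - (g.VV - g.S0) = g.S0" using g.S0_sub by blast
      have "is_fvs g.VV g.EE (g.VV - g.S0)" using g.acyc_fvs[OF sub] eq g.S0_acyc by simp
      moreover have "card (g.VV - g.S0) = ?T"
        using card_Diff_subset[OF _ g.S0_sub] g.card_S0 g.card_VV T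
        by (metis finite_subset g.S0_sub finite_atMost g.VV_def)
      ultimately show "\<exists>F. is_fvs g.VV g.EE F \<and> card F = ?T" by blast
    next
      fix y assume "\<exists>F. is_fvs g.VV g.EE F \<and> card F = y"
      then obtain F where F: "is_fvs g.VV g.EE F" "card F = y" by blast
      have FV: "F \<subseteq> g.VV" using F(1) unfolding is_fvs_def by blast
      have a: "g.acyc (g.VV - F)" using g.fvs_acyc[OF F(1)] .
      have b: "card (g.VV - F) \<le> 3*i+4" using g.forest_bound[OF a] by blast
      have fin: "finite g.VV" by (simp add: g.VV_def)
      have "card (g.VV - F) = card g.VV - card F" using card_Diff_subset[OF finite_subset[OF FV fin] FV] .
      moreover have "card F \<le> card g.VV" using card_mono[OF fin FV] .
      ultimately show "?T \<le> y" using b F(2) T g.card_VV by linarith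
    qed
    show "simple_graph (gr.VV m i) (gr.EE m i) \<and> degenerate k (gr.VV m i) (gr.EE m i) \<and>
           n_vertices (gr.VV m i) (gr.EE m i) = (3 * k + 6) div 2 + i * ((3 * k + 4) div 2) \<and>
           fvs_number (gr.VV m i) (gr.EE m i) = (3 * k - 2) div 2 + i * ((3 * k - 2) div 2)"
      using s d n f by blast
  qed
qed

end
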